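(* Consider the algorithm described in the context. Suppose $f$ is bounded below by $f_{\mathrm{low}}$, twice continuously differentiable with $L_H$-Lipschitz continuous Hessian, and $\|\nabla^2 f(\mathbf{x}_k)\|\leq M$ for all $k$, for some $M>0$. Fix $\epsilon>0$ and an iteration $k$ such that $$\theta := (1-\alpha)^2 - \frac{4M(r-1)\alpha^2}{\epsilon(1-\alpha)^2} > 0,$$ $P_k$ is well-aligned and $\sigma_k\geq\epsilon$. If iteration $k$ is successful, then $$\hat\sigma^m_k\geq c_1\epsilon,\qquad c_1:=\frac{\min(1-\alpha,(1-\alpha)^2,\theta)}{1+\kappa_\sigma\mu^{-1}},\qquad \kappa_\sigma:=\max(\kappa_{\mathrm{eg}}\Delta_{\max},\kappa_{\mathrm{eh}}).$$
   Context: Algorithm: Let $f:\mathbb{R}^n\to\mathbb{R}$. Fix $\mathbf{x}_0$, $p\in\{1,\ldots,n\}$, $0<\Delta_0\leq\Delta_{\max}$, $0<\gamma_{\mathrm{dec}}<1<\gamma_{\mathrm{inc}}$, $\eta\in(0,1)$, $\mu>0$. For $k=0,1,\ldots$: select a random $P_k\in\mathbb{R}^{n\times p}$; build $\hat m_k(\hat{\mathbf{s}})=f(\mathbf{x}_k)+\hat{\mathbf{g}}_k^T\hat{\mathbf{s}}+\frac12\hat{\mathbf{s}}^T\hat H_k\hat{\mathbf{s}}$ ($\hat H_k$ symmetric) which is $P_k$-fully quadratic: constants $\kappa_{\mathrm{ef}},\kappa_{\mathrm{eg}},\kappa_{\mathrm{eh}}>0$ independent of $k$ with $|f(\mathbf{x}_k+P_k\hat{\mathbf{s}})-\hat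 m_k(\hat{\mathbf{s}})|\leq\kappa_{\mathrm{ef}}\Delta_k^3$, $\|P_k^T\nabla f(\mathbf{x}_k+P_k\hat{\mathbf{s}})-\nabla\hat m_k(\hat{\mathbf{s}})\|\leq\kappa_{\mathrm{eg}}\Delta_k^2$, $\|P_k^T\nabla^2 f(\mathbf{x}_k+P_k\hat{\mathbf{s}})P_k-\hat H_k\|\leq\kappa_{\mathrm{eh}}\Delta_k$ for all $\|\hat{\mathbf{s}}\|\leq\Delta_k$; compute a step $\hat{\mathbf{s}}_k$ with $\|\hat{\mathbf{s}}_k\|\leq\Delta_k$; let $R_k:=\frac{f(\mathbf{x}_k)-f(\mathbf{x}_k+P_k\hat{\mathbf{s}}_k)}{\hat m_k(\mathbf{0})-\hat m_k(\hat{\mathbf{s}}_k)}$, $\hat\tau^m_k:=\max(-\lambda_{\min}(\hat H_k),0)$, $\hat\sigma^m_k:=\max(\|\hat{\mathbf{g}}_k\|,\hat\tau^m_k)$; if $R_k\geq\eta$ and $\hat\sigma^m_k\geq\mu\Delta_k$ the iteration is successful: $\mathbf{x}_{k+1}=\mathbf{x}_k+P_k\hat{\mathbf{s}}_k$, $\Delta_{k+1}=\min(\gamma_{\mathrm{inc}}\Delta_k,\Delta_{\max})$; otherwise unsuccessful: $\mathbf{x}_{k+1}=\mathbf{x}_k$, $\Delta_{k+1}=\gamma_{\mathrm{dec}}\Delta_k$. Criticality: $\tau_k:=\max(-\lambda_{\min}(\nabla^2 f(\mathbf{x}_k)),0)$, $\sigma_k:=\max(\|\nabla f(\mathbf{x}_k)\|,\tau_k)$.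 Well-alignment: write $\nabla^2 f(\mathbf{x}_k)=\sum_{i=1}^r\lambda_i\mathbf{v}_i\mathbf{v}_i^T$, $\lambda_1\geq\cdots\geq\lambda_r$, $r=\operatorname{rank}(\nabla^2 f(\mathbf{x}_k))$, $\mathbf{v}_i$ orthonormal, $\hat{\mathbf{v}}_i:=P_k^T\mathbf{v}_i$; $P_k$ is well-aligned if $\|P_k\|\leq P_{\max}$, $\|P_k^T\nabla f(\mathbf{x}_k)\|\geq(1-\alpha)\|\nabla f(\mathbf{x}_k)\|$, $\|\hat{\mathbf{v}}_r\|\geq1-\alpha$, and $(\hat{\mathbf{v}}_i^T\hat{\mathbf{v}}_r)^2\leq4\alpha^2$ for $i=1,\ldots,r-1$, for fixed $\alpha\in(0,1)$, $P_{\max}>0$ independent of $k$. *)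

theory Defs
  imports "HOL-Analysis.Analysis"
begin

(* Matrices are Cartesian: an n x p matrix is real^'p^'n (rows indexed by 'n).
   The matrix norm is the operator (spectral) norm, i.e. onorm of x \<mapsto> A *v x. *)

definition mat_norm :: "real^'p^'n \<Rightarrow> real" where
  "mat_norm A = onorm (\<lambda>x. A *v x)"

definition is_eigenvalue :: "real^'n^'n \<Rightarrow> real \<Rightarrow> bool" where
  "is_eigenvalue A l \<longleftrightarrow> (\<exists>v. v \<noteq> 0 \<and> A *v v = l *\<^sub>R v)"

(* smallest (real) eigenvalue; applied only to symmetric matrices *)
definition lambda_min :: "real^'n^'n \<Rightarrow> real" where
  "lambda_min A = Min {l. is_eigenvalue A l}"

definition outer :: "real^'n \<Rightarrow> real^'n^'n" where
  "outer v = (\<chi> i j. v $ i * v $ j)"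

definition tau_crit :: "real^'n^'n \<Rightarrow> real" where
  "tau_crit A = max (- lambda_min A) 0"

definition sigma_crit :: "real^'n \<Rightarrow> real^'n^'n \<Rightarrow> real" where
  "sigma_crit g A = max (norm g) (tau_crit A)"

definition qmodel :: "real \<Rightarrow> real^'p \<Rightarrow> real^'p^'p \<Rightarrow> real^'p \<Rightarrow> real" where
  "qmodel fx g H s = fx + g \<bullet> s + (1/2) * (s \<bullet> (H *v s))"

definition eig_decomp :: "real^'n^'n \<Rightarrow> (nat \<Rightarrow> real) \<Rightarrow> (nat \<Rightarrow> real^'n) \<Rightarrow> bool" where
  "eig_decomp A lam v \<longleftrightarrow>
     A = (\<Sum>i\<in>{1..rank A}. lam i *\<^sub>R outer (v i)) \<and>
     (\<forall>i\<in>{1..rank A}. \<forall>j\<in>{1..rank A}. i \<le> j \<longrightarrow> lam j \<le> lam i) \<and>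
     (\<forall>i\<in>{1..rank A}. \<forall>j\<in>{1..rank A}. v i \<bullet> v j = (if i = j then 1 else 0))"

definition well_aligned ::
  "real \<Rightarrow> real \<Rightarrow> real^'p^'n \<Rightarrow> real^'n \<Rightarrow> real^'n^'n \<Rightarrow> bool" where
  "well_aligned \<alpha> Pmax P g A \<longleftrightarrow>
     mat_norm P \<le> Pmax \<and>
     norm (transpose P *v g) \<ge> (1 - \<alpha>) * norm g \<and>
     (\<exists>lam v. eig_decomp A lam v \<and>
        (let r = rank A; vh = (\<lambda>i. transpose P *v v i) in
           norm (vh r) \<ge> 1 - \<alpha> \<and>
           (\<forall>i\<in>{1..<r}. (vh i \<bullet> vh r)^2 \<le> 4 * \<alpha>^2)))"

(* success test of iteration with data fx = f(x_k), fnew = f(x_k + P_k s_k) *)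
definition ratio_R :: "real \<Rightarrow> real \<Rightarrow> real^'p \<Rightarrow> real^'p^'p \<Rightarrow> real^'p \<Rightarrow> real" where
  "ratio_R fx fnew g H s = (fx - fnew) / (qmodel fx g H 0 - qmodel fx g H s)"

definition sigma_model :: "real^'p \<Rightarrow> real^'p^'p \<Rightarrow> real" where
  "sigma_model g H = max (norm g) (max (- lambda_min H) 0)"

definition successful ::
  "real \<Rightarrow> real \<Rightarrow> real \<Rightarrow> real \<Rightarrow> real^'p \<Rightarrow> real^'p^'p \<Rightarrow> real^'p \<Rightarrow> real \<Rightarrow> bool" where
  "successful \<eta> \<mu> fx fnew g H s Delta \<longleftrightarrow>
     ratio_R fx fnew g H s \<ge> \<eta> \<and> sigma_model g H \<ge> \<mu> * Delta"

end

theory Submission imports Defs begin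

lemma outer_mv: "outer v *v w = (v \<bullet> w) *\<^sub>R v"
proof -
  have "\<And>i. (\<Sum>j\<in>UNIV. v $ i * v $ j * w $ j) = (\<Sum>j\<in>UNIV. v $ j * w $ j) * v $ i"
    by (simp add: sum_distrib_left sum_distrib_right mult_ac)
  thus ?thesis by (simp add: vec_eq_iff outer_def matrix_vector_mult_def inner_vec_def)
qed

lemma sum_mv: "finite I \<Longrightarrow> (\<Sum>i\<in>I. c i *\<^sub>R M i) *v (w::real^'n) = (\<Sum>i\<in>I. c i *\<^sub>R (M i *v w))"
  for M :: "'a \<Rightarrow> real^'n^'m"
  by (induction I rule: finite_induct) (auto simp: matrix_vector_mult_add_rdistrib scaleR_matrix_vector_assoc)

lemma mat_norm_bound: "norm (A *v x) \<le> mat_norm A * norm x"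
  unfolding mat_norm_def by (rule onorm) simp

lemma quad_bound: "\<bar>u \<bullet> (A *v u)\<bar> \<le> mat_norm A * (norm u)^2"
proof -
  have "\<bar>u \<bullet> (A *v u)\<bar> \<le> norm u * norm (A *v u)" by (rule Cauchy_Schwarz_ineq2)
  also have "\<dots> \<le> norm u * (mat_norm A * norm u)" by (simp add: mat_norm_bound mult_left_mono)
  finally show ?thesis by (simp add: power2_eq_square mult_ac)
qed

lemma sym_inner: "transpose H = H \<Longrightarrow> u \<bullet> (H *v w) = (H *v u) \<bullet> (w::real^'n)"
  by (metis dot_lmul_matrix inner_commute transpose_matrix_vector)

lemma quad_nonneg_lin_zero:
  fixes a b :: real
  assumes "\<And>t. 0 \<le> 2*t*b + t^2*a" "b \<ge> 0" shows "b = 0"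
proof (rule ccontr)
  assume "b \<noteq> 0" hence bp: "b > 0" using assms by simp
  define t where "t = - b / (\<bar>a\<bar> + 1)"
  have tn: "t < 0" using bp by (simp add: t_def divide_neg_pos)
  have "t * a \<ge> - b"
  proof -
    have "\<bar>t * a\<bar> = b * \<bar>a\<bar> / (\<bar>a\<bar>+1)" using bp by (simp add: t_def abs_mult)
    also have "\<dots> \<le> b" using bp by (simp add: divide_le_eq)
    finally show ?thesis by linarith
  qed
  hence "2*b + t*a > 0" using bp by linarith
  hence "t * (2*b + t*a) < 0" using tn by (simp add: mult_neg_pos)
  moreover have "t * (2*b + t*a) = 2*t*b + t^2*a" by (simp add: power2_eq_square algebra_simps)
  ultimately show False using assms(1)[of t] by linarith
qed

lemma sym_eig_finite:
  fixes H :: "real^'p^'p" assumes sym: "transpose H = H"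
  shows "finite {l. is_eigenvalue H l}"
proof -
  define S where "S = {l. is_eigenvalue H l}"
  define ev where "ev l = (SOME v. v \<noteq> 0 \<and> H *v v = l *\<^sub>R v)" for l
  have ev: "ev l \<noteq> 0 \<and> H *v ev l = l *\<^sub>R ev l" if "l \<in> S" for l
  proof -
    have "\<exists>v. v \<noteq> 0 \<and> H *v v = l *\<^sub>R v" using that unfolding S_def is_eigenvalue_def by simp
    thus ?thesis unfolding ev_def by (rule someI_ex)
  qed
  have inj: "inj_on ev S"
  proof (rule inj_onI)
    fix a b assume ab: "a \<in> S" "b \<in> S" "ev a = ev b"
    have "a *\<^sub>R ev a = H *v ev a" using ev[OF ab(1)] by (simp only:)
    also have "\<dots> = H *v ev b" by (simp only: ab(3))
    also have "\<dots> = b *\<^sub>R ev b" using ev[OF ab(2)] by (simp only:)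
    also have "\<dots> = b *\<^sub>R ev a" by (simp only: ab(3))
    finally have "(a - b) *\<^sub>R ev a = 0" by (simp add: algebra_simps)
    thus "a = b" using ev[OF ab(1)] by simp
  qed
  have "pairwise orthogonal (ev ` S)"
  proof (rule pairwiseI)
    fix x y assume "x \<in> ev ` S" "y \<in> ev ` S" "x \<noteq> y"
    then obtain a b where ab: "a \<in> S" "b \<in> S" "x = ev a" "y = ev b" "a \<noteq> b" by blast
    have "a * (x \<bullet> y) = (H *v x) \<bullet> y" using ev[OF ab(1)] ab by simp
    also have "\<dots> = x \<bullet> (H *v y)" using sym_inner[OF sym, of x y] by simp
    also have "\<dots> = b * (x \<bullet> y)" using ev[OF ab(2)] ab by simp
    finally have "(a - b) * (x \<bullet> y) = 0" by (simp add: algebra_simps)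
    thus "orthogonal x y" using ab(5) by (simp add: orthogonal_def)
  qed
  moreover have "0 \<notin> ev ` S" using ev by force
  ultimately have "independent (ev ` S)" by (rule pairwise_orthogonal_independent)
  hence "finite (ev ` S)" by (rule finiteI_independent)
  thus ?thesis using inj finite_imageD S_def by blast
qed

lemma sym_min_eig:
  fixes H :: "real^'p^'p" assumes sym: "transpose H = H"
  shows "is_eigenvalue H (lambda_min H) \<and> (\<forall>u. lambda_min H * (norm u)^2 \<le> u \<bullet> (H *v u))"
proof -
  define q where "q u = u \<bullet> (H *v u)" for u :: "real^'p"
  have cont: "continuous_on (sphere 0 1) q" unfolding q_def
    by (intro continuous_intros linear_continuous_on matrix_vector_mul_bounded_linear)
  obtain e :: "real^'p" where "norm e = 1" using vector_choose_size[of 1] by auto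
  hence ne: "sphere (0::real^'p) 1 \<noteq> {}" by auto
  obtain u0 where u0: "u0 \<in> sphere 0 1" "\<forall>y\<in>sphere 0 1. q u0 \<le> q y"
    using continuous_attains_inf[OF compact_sphere ne cont] by blast
  define m where "m = q u0"
  have n1: "norm u0 = 1" using u0 by simp
  have ray: "m * (norm u)^2 \<le> q u" for u
  proof (cases "u = 0")
    case True thus ?thesis by (simp add: q_def)
  next
    case False
    define y where "y = (1 / norm u) *\<^sub>R u"
    have "y \<in> sphere 0 1" using False by (simp add: y_def)
    hence "m \<le> q y" using u0 m_def by blast
    also have "q y = q u / (norm u)^2"
      by (simp add: q_def y_def matrix_vector_mult_scaleR power2_eq_square)
    finally show ?thesis using False by (simp add: le_divide_eq)
  qed
  define d where "d = H *v u0 - m *\<^sub>R u0"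
  have "0 \<le> 2*t*(norm d)^2 + t^2*(q d - m * (norm d)^2)" for t
  proof -
    have "m * (norm (u0 + t *\<^sub>R d))^2 \<le> q (u0 + t *\<^sub>R d)" by (rule ray)
    moreover have "(norm (u0 + t *\<^sub>R d))^2 = 1 + 2*t*(d \<bullet> u0) + t^2 * (norm d)^2"
    proof -
      have "(norm (u0 + t *\<^sub>R d))^2 = (u0 + t *\<^sub>R d) \<bullet> (u0 + t *\<^sub>R d)" by (simp only: power2_norm_eq_inner)
      also have "\<dots> = u0 \<bullet> u0 + 2*t*(d \<bullet> u0) + t^2*(d \<bullet> d)"
        by (simp add: inner_add_left inner_add_right power2_eq_square inner_commute[of u0 d] algebra_simps)
      also have "u0 \<bullet> u0 = 1" using n1 by (metis power2_norm_eq_inner one_power2)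
      also have "d \<bullet> d = (norm d)^2" by (simp only: power2_norm_eq_inner)
      finally show ?thesis .
    qed
    moreover have "q (u0 + t *\<^sub>R d) = m + 2*t*(d \<bullet> (H *v u0)) + t^2 * q d"
    proof -
      have "q (u0 + t *\<^sub>R d) = u0 \<bullet> (H *v u0) + t * (u0 \<bullet> (H *v d)) + t * (d \<bullet> (H *v u0)) + t^2 * (d \<bullet> (H *v d))"
        unfolding q_def by (simp add: matrix_vector_right_distrib matrix_vector_mult_scaleR inner_add_left inner_add_right power2_eq_square distrib_left)
      moreover have "u0 \<bullet> (H *v d) = d \<bullet> (H *v u0)" using sym_inner[OF sym, of u0 d] by (simp add: inner_commute)
      ultimately show ?thesis unfolding q_def m_def by simp
    qed
    moreover have "d \<bullet> (H *v u0) = (norm d)^2 + m * (d \<bullet> u0)"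
      by (simp add: d_def power2_norm_eq_inner inner_diff_left inner_diff_right algebra_simps)
    ultimately show ?thesis by (simp add: algebra_simps)
  qed
  hence "(norm d)^2 = 0" by (intro quad_nonneg_lin_zero) auto
  hence "H *v u0 = m *\<^sub>R u0" by (simp add: d_def)
  hence eig: "is_eigenvalue H m" using n1 unfolding is_eigenvalue_def by (intro exI[of _ u0]) auto
  have fin: "finite {l. is_eigenvalue H l}" by (rule sym_eig_finite[OF sym])
  have le: "lambda_min H \<le> m" unfolding lambda_min_def using fin eig by (intro Min_le) auto
  have inS: "is_eigenvalue H (lambda_min H)" unfolding lambda_min_def using fin eig Min_in[OF fin] by blast
  have "lambda_min H * (norm u)^2 \<le> u \<bullet> (H *v u)" for u
  proof -
    have "lambda_min H * (norm u)^2 \<le> m * (norm u)^2" using le by (simp add: mult_right_mono)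
    thus ?thesis using ray[of u] by (simp add: q_def)
  qed
  thus ?thesis using inS by blast
qed

theorem lemma3p9:
  fixes f :: "real^'n \<Rightarrow> real"
    and grad :: "real^'n \<Rightarrow> real^'n"
    and hess :: "real^'n \<Rightarrow> real^'n^'n"
    and x :: "nat \<Rightarrow> real^'n"
    and P :: "nat \<Rightarrow> real^'p^'n"
    and g :: "nat \<Rightarrow> real^'p"
    and H :: "nat \<Rightarrow> real^'p^'p"
    and s :: "nat \<Rightarrow> real^'p"
    and \<Delta> :: "nat \<Rightarrow> real"
    and x0 :: "real^'n"
    and \<Delta>0 \<Delta>max \<gamma>dec \<gamma>inc \<eta> \<mu> \<kappa>ef \<kappa>eg \<kappa>eh flow LH M \<alpha> Pmax \<epsilon> :: real
    and k :: nat
  assumes dims: "CARD('p) \<le> CARD('n)"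
    and f_deriv: "\<And>y. (f has_derivative (\<lambda>h. grad y \<bullet> h)) (at y)"
    and grad_deriv: "\<And>y. (grad has_derivative (\<lambda>h. hess y *v h)) (at y)"
    and hess_cont: "continuous_on UNIV hess"
    and hess_lip: "\<And>y z. mat_norm (hess y - hess z) \<le> LH * dist y z"
    and f_low: "\<And>y. flow \<le> f y"
    and M_pos: "M > 0"
    and hess_bd: "\<And>j. mat_norm (hess (x j)) \<le> M"
    and params: "0 < \<Delta>0" "\<Delta>0 \<le> \<Delta>max" "0 < \<gamma>dec" "\<gamma>dec < 1" "1 < \<gamma>inc"
                "0 < \<eta>" "\<eta> < 1" "0 < \<mu>"
    and kappas: "\<kappa>ef > 0" "\<kappa>eg > 0" "\<kappa>eh > 0"
    and init: "x 0 = x0" "\<Delta> 0 = \<Delta>0"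
    and H_sym: "\<And>j. transpose (H j) = H j"
    and fq_f: "\<And>j sh. norm sh \<le> \<Delta> j \<Longrightarrow>
               \<bar>f (x j + P j *v sh) - qmodel (f (x j)) (g j) (H j) sh\<bar> \<le> \<kappa>ef * \<Delta> j ^ 3"
    and fq_g: "\<And>j sh. norm sh \<le> \<Delta> j \<Longrightarrow>
               norm (transpose (P j) *v grad (x j + P j *v sh) - (g j + H j *v sh)) \<le> \<kappa>eg * \<Delta> j ^ 2"
    and fq_h: "\<And>j sh. norm sh \<le> \<Delta> j \<Longrightarrow>
               mat_norm (transpose (P j) ** hess (x j + P j *v sh) ** P j - H j) \<le> \<kappa>eh * \<Delta> j"
    and step_bd: "\<And>j. norm (s j) \<le> \<Delta> j"
    and update: "\<And>j. if successful \<eta> \<mu> (f (x j)) (f (x j + P j *v s j)) (g j) (H j) (s j) (\<Delta> j)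
                      then x (Suc j) = x j + P j *v s j \<and> \<Delta> (Suc j) = min (\<gamma>inc * \<Delta> j) \<Delta>max
                      else x (Suc j) = x j \<and> \<Delta> (Suc j) = \<gamma>dec * \<Delta> j"
    and alpha: "0 < \<alpha>" "\<alpha> < 1"
    and Pmax_pos: "Pmax > 0"
    and eps_pos: "\<epsilon> > 0"
    and theta_pos: "(1 - \<alpha>)^2 - 4 * M * (real (rank (hess (x k))) - 1) * \<alpha>^2 / (\<epsilon> * (1 - \<alpha>)^2) > 0"
    and aligned: "well_aligned \<alpha> Pmax (P k) (grad (x k)) (hess (x k))"
    and crit: "sigma_crit (grad (x k)) (hess (x k)) \<ge> \<epsilon>"
    and succ: "successful \<eta> \<mu> (f (x k)) (f (x k + P k *v s k)) (g k) (H k) (s k) (\<Delta> k)"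
  shows "sigma_model (g k) (H k) \<ge>
     (min (1 - \<alpha>) (min ((1 - \<alpha>)^2)
        ((1 - \<alpha>)^2 - 4 * M * (real (rank (hess (x k))) - 1) * \<alpha>^2 / (\<epsilon> * (1 - \<alpha>)^2)))
      / (1 + max (\<kappa>eg * \<Delta>max) \<kappa>eh / \<mu>)) * \<epsilon>"
proof -
  define A where "A = hess (x k)"
  define r where "r = rank A"
  define G where "G = grad (x k)"
  define Pk where "Pk = P k"
  define D where "D = \<Delta> k"
  define \<sigma> where "\<sigma> = sigma_model (g k) (H k)"
  define \<kappa>s where "\<kappa>s = max (\<kappa>eg * \<Delta>max) \<kappa>eh"
  define \<theta> where "\<theta> = (1 - \<alpha>)^2 - 4 * M * (real r - 1) * \<alpha>^2 / (\<epsilon> * (1 - \<alpha>)^2)"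
  define c where "c = min (1 - \<alpha>) (min ((1 - \<alpha>)^2) \<theta>)"
  have D0: "0 \<le> D" unfolding D_def by (rule order_trans[OF norm_ge_zero step_bd])
  have Dmax_all: "\<Delta> j \<le> \<Delta>max" for j
  proof (induction j)
    case 0 thus ?case using init params by simp
  next
    case (Suc j)
    have "0 \<le> \<Delta> j" by (rule order_trans[OF norm_ge_zero step_bd])
    hence "\<gamma>dec * \<Delta> j \<le> \<Delta> j" using mult_right_mono[of \<gamma>dec 1 "\<Delta> j"] params by simp
    thus ?case using update[of j] Suc params by (auto split: if_splits)
  qed
  have Dmax: "D \<le> \<Delta>max" unfolding D_def by (rule Dmax_all)
  have sD: "\<mu> * D \<le> \<sigma>" using succ unfolding successful_def \<sigma>_def D_def by simp
  have \<kappa>s0: "0 \<le> \<kappa>s" using kappas unfolding \<kappa>s_def by simp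
  have \<sigma>0: "0 \<le> \<sigma>" unfolding \<sigma>_def sigma_model_def by simp
  have kD: "\<kappa>s * D \<le> \<kappa>s * \<sigma> / \<mu>"
  proof -
    have "D \<le> \<sigma> / \<mu>" using sD params by (simp add: le_divide_eq mult.commute)
    thus ?thesis using \<kappa>s0 by (metis mult_left_mono times_divide_eq_right)
  qed
  have key: "c * \<epsilon> \<le> \<sigma> + \<kappa>s * \<sigma> / \<mu>"
  proof (cases "norm G \<ge> \<epsilon>")
    case True
    have gb: "norm (transpose Pk *v G - g k) \<le> \<kappa>eg * D^2"
      using fq_g[of 0 k] D0 unfolding Pk_def G_def D_def by simp
    have "(1 - \<alpha>) * \<epsilon> \<le> (1 - \<alpha>) * norm G" using True alpha by simp
    also have "\<dots> \<le> norm (transpose Pk *v G)" using aligned unfolding well_aligned_def Pk_def G_def by simp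
    also have "\<dots> \<le> norm (g k) + \<kappa>eg * D^2" using gb norm_triangle_ineq2[of "transpose Pk *v G" "g k"] by linarith
    also have "\<kappa>eg * D^2 \<le> \<kappa>s * D"
    proof -
      have "\<kappa>eg * D^2 = (\<kappa>eg * D) * D" by (simp add: power2_eq_square)
      also have "\<dots> \<le> (\<kappa>eg * \<Delta>max) * D" using Dmax D0 kappas by (intro mult_right_mono) auto
      also have "\<dots> \<le> \<kappa>s * D" unfolding \<kappa>s_def using D0 by (intro mult_right_mono) auto
      finally show ?thesis .
    qed
    also have "norm (g k) \<le> \<sigma>" unfolding \<sigma>_def sigma_model_def by simp
    finally have "(1 - \<alpha>) * \<epsilon> \<le> \<sigma> + \<kappa>s * \<sigma> / \<mu>" using kD by linarith
    moreover have "c * \<epsilon> \<le> (1 - \<alpha>) * \<epsilon>" unfolding c_def using eps_pos by (intro mult_right_mono) auto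
    ultimately show ?thesis by linarith
  next
    case False
    have tau: "\<epsilon> \<le> - lambda_min A"
      using crit False eps_pos unfolding sigma_crit_def tau_crit_def A_def G_def by auto
    obtain lam v where ed: "eig_decomp A lam v"
      and al1: "norm (transpose Pk *v v r) \<ge> 1 - \<alpha>"
      and al2: "\<forall>i\<in>{1..<r}. ((transpose Pk *v v i) \<bullet> (transpose Pk *v v r))^2 \<le> 4 * \<alpha>^2"
      using aligned unfolding well_aligned_def Let_def A_def r_def Pk_def G_def by blast
    have Adec: "A = (\<Sum>i\<in>{1..r}. lam i *\<^sub>R outer (v i))" using ed unfolding eig_decomp_def r_def by simp
    have lam_ord: "\<And>i j. i \<in> {1..r} \<Longrightarrow> j \<in> {1..r} \<Longrightarrow> i \<le> j \<Longrightarrow> lam j \<le> lam i"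
      using ed unfolding eig_decomp_def r_def by blast
    have orth: "\<And>i j. i \<in> {1..r} \<Longrightarrow> j \<in> {1..r} \<Longrightarrow> v i \<bullet> v j = (if i = j then 1 else 0)"
      using ed unfolding eig_decomp_def r_def by blast
    have Amv: "A *v w = (\<Sum>i\<in>{1..r}. (lam i * (v i \<bullet> w)) *\<^sub>R v i)" for w
      by (subst Adec) (simp add: sum_mv outer_mv)
    have Asym: "transpose A = A"
      by (subst (1 2) Adec) (simp add: vec_eq_iff transpose_def outer_def mult_ac)
    have Ainner: "(A *v w) \<bullet> v j = lam j * (v j \<bullet> w)" if j: "j \<in> {1..r}" for w j
    proof -
      have "(A *v w) \<bullet> v j = (\<Sum>i\<in>{1..r}. lam i * (v i \<bullet> w) * (v i \<bullet> v j))"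
        by (simp add: Amv inner_sum_left)
      also have "\<dots> = (\<Sum>i\<in>{1..r}. if i = j then lam j * (v j \<bullet> w) else 0)"
        using orth[OF _ j] by (intro sum.cong) auto
      also have "\<dots> = lam j * (v j \<bullet> w)" using j by simp
      finally show ?thesis .
    qed
    have me: "is_eigenvalue A (lambda_min A)" using sym_min_eig[OF Asym] by blast
    then obtain w where w: "w \<noteq> 0" "A *v w = lambda_min A *\<^sub>R w" unfolding is_eigenvalue_def by blast
    have lneg: "lambda_min A < 0" using tau eps_pos by linarith
    have "\<exists>j\<in>{1..r}. lam j = lambda_min A"
    proof (rule ccontr)
      assume nj: "\<not> ?thesis"
      have z: "v j \<bullet> w = 0" if "j \<in> {1..r}" for j
      proof -
        have "lambda_min A * (w \<bullet> v j) = lam j * (v j \<bullet> w)" using Ainner[OF that, of w] w(2) by simp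
        hence "(lambda_min A - lam j) * (v j \<bullet> w) = 0" by (simp add: inner_commute algebra_simps)
        thus ?thesis using nj that by auto
      qed
      have "A *v w = 0" unfolding Amv using z by simp
      hence "lambda_min A *\<^sub>R w = 0" using w by simp
      thus False using w(1) lneg by simp
    qed
    then obtain j where j: "j \<in> {1..r}" "lam j = lambda_min A" by blast
    have r1: "1 \<le> r" using j by simp
    have lamr: "lam r \<le> - \<epsilon>" using lam_ord[OF j(1), of r] j r1 tau by auto
    have lamM: "lam i \<le> M" if "i \<in> {1..r}" for i
    proof -
      have "lam i = (A *v v i) \<bullet> v i" using Ainner[OF that] orth[OF that that] by simp
      also have "\<dots> \<le> \<bar>v i \<bullet> (A *v v i)\<bar>" by (simp add: inner_commute)
      also have "\<dots> \<le> mat_norm A * (norm (v i))^2" by (rule quad_bound)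
      also have "(norm (v i))^2 = 1" using orth[OF that that] by (simp add: power2_norm_eq_inner)
      finally show ?thesis using hess_bd[of k] unfolding A_def by simp
    qed
    define vh where "vh i = transpose Pk *v v i" for i
    define u where "u = vh r"
    define N where "N = (norm u)^2"
    have N1: "(1 - \<alpha>)^2 \<le> N" unfolding N_def u_def vh_def using al1 alpha by (intro power_mono) auto
    have Npos: "0 < N" using N1 alpha by (smt (verit) zero_less_power)
    define B where "B = transpose Pk ** A ** Pk"
    have vPu: "v i \<bullet> (Pk *v u) = vh i \<bullet> u" for i
      unfolding vh_def by (metis dot_lmul_matrix inner_commute transpose_matrix_vector)
    have uBu: "u \<bullet> (B *v u) = (\<Sum>i\<in>{1..r}. lam i * (vh i \<bullet> u)^2)"
    proof -
      have "u \<bullet> (B *v u) = (Pk *v u) \<bullet> (A *v (Pk *v u))"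
        unfolding B_def by (metis dot_lmul_matrix inner_commute matrix_vector_mul_assoc transpose_matrix_vector)
      also have "\<dots> = (\<Sum>i\<in>{1..r}. lam i * (v i \<bullet> (Pk *v u)) * ((Pk *v u) \<bullet> v i))"
        by (simp add: Amv inner_sum_right mult.assoc)
      also have "\<dots> = (\<Sum>i\<in>{1..r}. lam i * (vh i \<bullet> u)^2)"
        by (intro sum.cong refl) (simp add: vPu inner_commute[of "Pk *v u"] power2_eq_square mult.assoc)
      finally show ?thesis .
    qed
    have split: "{1..r} = insert r {1..<r}" using r1 by auto
    have uBu2: "u \<bullet> (B *v u) \<le> lam r * N^2 + (real r - 1) * (M * (4 * \<alpha>^2))"
    proof -
      have "u \<bullet> (B *v u) = lam r * (u \<bullet> u)^2 + (\<Sum>i\<in>{1..<r}. lam i * (vh i \<bullet> u)^2)"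
        by (subst uBu, subst split) (simp add: u_def)
      also have "u \<bullet> u = N" unfolding N_def by (simp add: power2_norm_eq_inner)
      also have "(\<Sum>i\<in>{1..<r}. lam i * (vh i \<bullet> u)^2) \<le> (\<Sum>i\<in>{1..<r}. M * (4 * \<alpha>^2))"
      proof (rule sum_mono)
        fix i assume i: "i \<in> {1..<r}"
        have s0: "0 \<le> (vh i \<bullet> u)^2" by simp
        have s1: "(vh i \<bullet> u)^2 \<le> 4 * \<alpha>^2" using al2 i unfolding vh_def u_def by blast
        have "lam i * (vh i \<bullet> u)^2 \<le> M * (vh i \<bullet> u)^2" using lamM[of i] i s0 by (intro mult_right_mono) auto
        also have "\<dots> \<le> M * (4 * \<alpha>^2)" using s1 M_pos by (intro mult_left_mono) auto
        finally show "lam i * (vh i \<bullet> u)^2 \<le> M * (4 * \<alpha>^2)" .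
      qed
      also have "(\<Sum>i\<in>{1..<r}. M * (4 * \<alpha>^2)) = (real r - 1) * (M * (4 * \<alpha>^2))"
        using r1 by (simp add: of_nat_diff)
      finally show ?thesis by linarith
    qed
    have hb: "mat_norm (B - H k) \<le> \<kappa>eh * D"
      using fq_h[of 0 k] D0 unfolding B_def Pk_def A_def D_def by simp
    have "u \<bullet> (H k *v u) \<le> u \<bullet> (B *v u) + \<kappa>eh * D * N"
    proof -
      have "u \<bullet> (B *v u) - u \<bullet> (H k *v u) = u \<bullet> ((B - H k) *v u)"
        by (simp add: matrix_vector_mult_diff_rdistrib inner_diff_right)
      also have "\<dots> \<ge> - (mat_norm (B - H k) * N)" unfolding N_def using quad_bound[of u "B - H k"] by linarith
      finally have "u \<bullet> (H k *v u) \<le> u \<bullet> (B *v u) + mat_norm (B - H k) * N" by linarith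
      moreover have "mat_norm (B - H k) * N \<le> \<kappa>eh * D * N" using hb Npos by (intro mult_right_mono) auto
      ultimately show ?thesis by linarith
    qed
    moreover have "lambda_min (H k) * N \<le> u \<bullet> (H k *v u)"
      using sym_min_eig[OF H_sym[of k]] unfolding N_def by blast
    ultimately have L: "lambda_min (H k) * N \<le> lam r * N^2 + (real r - 1) * (M * (4 * \<alpha>^2)) + \<kappa>eh * D * N"
      using uBu2 by linarith
    define Q where "Q = (real r - 1) * (M * (4 * \<alpha>^2))"
    have Q0: "0 \<le> Q" unfolding Q_def using r1 M_pos by simp
    have L2: "lambda_min (H k) \<le> lam r * N + Q / N + \<kappa>eh * D"
    proof -
      have e: "(lam r * N + Q / N + \<kappa>eh * D) * N = lam r * N^2 + Q + \<kappa>eh * D * N"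
        using Npos by (simp add: field_simps power2_eq_square)
      have "lambda_min (H k) * N \<le> (lam r * N + Q / N + \<kappa>eh * D) * N"
        unfolding e using L unfolding Q_def by linarith
      thus ?thesis using Npos by simp
    qed
    have a1: "lam r * N \<le> - \<epsilon> * (1 - \<alpha>)^2"
    proof -
      have "lam r * N \<le> lam r * (1 - \<alpha>)^2" using lamr eps_pos N1 by (intro mult_left_mono_neg) auto
      also have "\<dots> \<le> - \<epsilon> * (1 - \<alpha>)^2" using lamr by (intro mult_right_mono) auto
      finally show ?thesis .
    qed
    have a2: "Q / N \<le> Q / (1 - \<alpha>)^2" using Q0 N1 alpha Npos by (intro divide_left_mono) auto
    have th: "- \<epsilon> * (1 - \<alpha>)^2 + Q / (1 - \<alpha>)^2 = - \<epsilon> * \<theta>"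
      unfolding \<theta>_def Q_def using eps_pos alpha by (simp add: field_simps)
    have "\<epsilon> * \<theta> - \<kappa>eh * D \<le> - lambda_min (H k)" using L2 a1 a2 th by linarith
    also have "\<dots> \<le> \<sigma>" unfolding \<sigma>_def sigma_model_def by simp
    finally have "\<epsilon> * \<theta> \<le> \<sigma> + \<kappa>eh * D" by linarith
    moreover have "\<kappa>eh * D \<le> \<kappa>s * D" unfolding \<kappa>s_def using D0 by (intro mult_right_mono) auto
    moreover have "c * \<epsilon> \<le> \<theta> * \<epsilon>" unfolding c_def using eps_pos by (intro mult_right_mono) auto
    ultimately show ?thesis using kD by (simp add: mult.commute)
  qed
  have den: "0 < 1 + \<kappa>s / \<mu>" using \<kappa>s0 params by (simp add: add_pos_nonneg)
  have "c * \<epsilon> \<le> \<sigma> * (1 + \<kappa>s / \<mu>)" using key by (simp add: algebra_simps)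
  hence "c / (1 + \<kappa>s / \<mu>) * \<epsilon> \<le> \<sigma>" using den by (simp add: field_simps)
  thus ?thesis unfolding c_def \<theta>_def \<kappa>s_def \<sigma>_def r_def A_def .
qed

end
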